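(* Let $A,B$ be persistence diagrams with $A$ nonempty, let $d_0=\min\{d_\infty(A,B),d_\infty(D_0,B)\}$, $c_{\min}=\max\{0,(\mathrm{pers}(B)-d_0)/\mathrm{pers}(A)\}$, $c_{\max}=(\mathrm{pers}(B)+d_0)/\mathrm{pers}(A)$, let $N\ge1$, and let $t_i=c_{\min}+\tfrac{i}{N}(c_{\max}-c_{\min})$ for $i=0,\dots,N$. Set $\widehat{d_D}(A,B)=\min_{0\le i\le N}d_\infty(t_iA,B)$. Then $$0\le \widehat{d_D}(A,B)-\overline{d_D}(A,B)\le \frac{2d_0\,\mathrm{bd}(A)}{N\,\mathrm{pers}(A)}.$$
   Context: A persistence diagram is a finite multiset of points $a=(a_x,a_y)$ with $0\le a_x<a_y<\infty$ together with the diagonal $\Delta$ of infinite multiplicity; $D_0$ is the empty diagram. $d_\infty$ is the bottleneck distance. $cA=\{(ca_x,ca_y)\}$ for $c>0$ and $0A=D_0$. $\overline{d_D}(A,B)=\inf_{c\ge0}d_\infty(cA,B)$. $\mathrm{pers}(a)=(a_y-a_x)/2$, $\mathrm{pers}(A)=\max_{a\in A}\mathrm{pers}(a)$, and $\mathrm{bd}(A)=\max_{a\in A}\|a\|_\infty=\max_{a\in A}a_y$. *)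

theory Defs
  imports Complex_Main "HOL-Library.Multiset"
begin

text \<open>A persistence diagram: a finite multiset of off-diagonal points (the diagonal,
 of infinite multiplicity, is implicit via partial matchings).\<close>
type_synonym pdiag = "(real \<times> real) multiset"

definition is_pd :: "pdiag \<Rightarrow> bool" where
  "is_pd A \<longleftrightarrow> (\<forall>a\<in>#A. 0 \<le> fst a \<and> fst a < snd a)"

definition linf :: "real \<times> real \<Rightarrow> real \<times> real \<Rightarrow> real" where
  "linf a b = max \<bar>fst a - fst b\<bar> \<bar>snd a - snd b\<bar>"

text \<open>persistence of a point = its L-infinity distance to the diagonal\<close>
definition pers :: "real \<times> real \<Rightarrow> real" where
  "pers a = (snd a - fst a) / 2"

text \<open>A matching of A \<union> Delta with B \<union> Delta: a multiset of matched pairs;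
 all remaining points are matched to the diagonal.\<close>
definition is_matching :: "pdiag \<Rightarrow> pdiag \<Rightarrow> ((real \<times> real) \<times> (real \<times> real)) multiset \<Rightarrow> bool" where
  "is_matching A B M \<longleftrightarrow> image_mset fst M \<subseteq># A \<and> image_mset snd M \<subseteq># B"

definition match_cost :: "pdiag \<Rightarrow> pdiag \<Rightarrow> ((real \<times> real) \<times> (real \<times> real)) multiset \<Rightarrow> real" where
  "match_cost A B M = Max ({0} \<union> (\<lambda>(a,b). linf a b) ` set_mset M
      \<union> pers ` set_mset (A - image_mset fst M) \<union> pers ` set_mset (B - image_mset snd M))"

definition bottleneck :: "pdiag \<Rightarrow> pdiag \<Rightarrow> real" where
  "bottleneck A B = Inf (match_cost A B ` {M. is_matching A B M})"

definition scale_pd :: "real \<Rightarrow> pdiag \<Rightarrow> pdiag" where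
  "scale_pd c A = (if c = 0 then {#} else image_mset (\<lambda>(x,y). (c * x, c * y)) A)"

definition dbar :: "pdiag \<Rightarrow> pdiag \<Rightarrow> real" where
  "dbar A B = Inf ((\<lambda>c. bottleneck (scale_pd c A) B) ` {0..})"

definition pers_pd :: "pdiag \<Rightarrow> real" where
  "pers_pd A = Max (insert 0 (pers ` set_mset A))"

definition bd_pd :: "pdiag \<Rightarrow> real" where
  "bd_pd A = Max (insert 0 (snd ` set_mset A))"

end

theory Submission
  imports Defs
begin

lemma mc_finite: "finite ({0} \<union> (\<lambda>(a,b). linf a b) ` set_mset M
      \<union> pers ` set_mset (A - image_mset fst M) \<union> pers ` set_mset (B - image_mset snd M))"
  by auto

lemma mc_ge:
  assumes "x \<in> ({0} \<union> (\<lambda>(a,b). linf a b) ` set_mset M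
      \<union> pers ` set_mset (A - image_mset fst M) \<union> pers ` set_mset (B - image_mset snd M))"
  shows "x \<le> match_cost A B M"
  unfolding match_cost_def using assms by (intro Max_ge) auto

lemma mc_nonneg: "0 \<le> match_cost A B M"
  by (rule mc_ge) auto

lemma mc_le:
  assumes "0 \<le> r" "\<And>a b. (a,b) \<in># M \<Longrightarrow> linf a b \<le> r"
    "\<And>a. a \<in># A - image_mset fst M \<Longrightarrow> pers a \<le> r"
    "\<And>b. b \<in># B - image_mset snd M \<Longrightarrow> pers b \<le> r"
  shows "match_cost A B M \<le> r"
  unfolding match_cost_def using assms by (subst Max_le_iff) auto

lemma is_matching_empty: "is_matching A B {#}"
  by (simp add: is_matching_def)

lemma bn_le: "is_matching A B M \<Longrightarrow> bottleneck A B \<le> match_cost A B M"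
  unfolding bottleneck_def
  by (rule cInf_lower) (auto intro!: bdd_belowI[where m=0] mc_nonneg)

lemma bn_ge: "(\<And>M. is_matching A B M \<Longrightarrow> r \<le> match_cost A B M) \<Longrightarrow> r \<le> bottleneck A B"
  unfolding bottleneck_def
  by (rule cInf_greatest) (use is_matching_empty in auto)

lemma bn_nonneg: "0 \<le> bottleneck A B"
  by (rule bn_ge) (rule mc_nonneg)

lemma pers_linf: "pers x \<le> pers b + linf x b"
  unfolding pers_def linf_def by (simp add: abs_if max_def field_simps)

lemma linf_sym: "linf a b = linf b a"
  unfolding linf_def by (simp add: abs_minus_commute)

lemma pers_pd_ge: "x \<in># X \<Longrightarrow> pers x \<le> pers_pd X"
  unfolding pers_pd_def by (intro Max_ge) auto

lemma pers_pd_nonneg: "0 \<le> pers_pd X"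
  unfolding pers_pd_def by (intro Max_ge) auto

lemma pers_pd_le: "0 \<le> r \<Longrightarrow> (\<And>x. x \<in># X \<Longrightarrow> pers x \<le> r) \<Longrightarrow> pers_pd X \<le> r"
  unfolding pers_pd_def by (subst Max_le_iff) auto

lemma in_diff_or: "x \<in># X \<Longrightarrow> x \<in># X - N \<or> x \<in># N"
  by (metis count_diff count_greater_zero_iff diff_zero not_gr_zero) 

lemma pers_lip1: "pers_pd X \<le> pers_pd B + bottleneck X B"
proof -
  have "pers_pd X - pers_pd B \<le> bottleneck X B"
  proof (rule bn_ge)
    fix M assume M: "is_matching X B M"
    have "pers_pd X \<le> pers_pd B + match_cost X B M"
    proof (rule pers_pd_le)
      show "0 \<le> pers_pd B + match_cost X B M" using pers_pd_nonneg mc_nonneg by (simp add: add_nonneg_nonneg)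
      fix x assume x: "x \<in># X"
      show "pers x \<le> pers_pd B + match_cost X B M"
      proof (cases "x \<in># X - image_mset fst M")
        case True
        then have "pers x \<le> match_cost X B M" by (intro mc_ge) auto
        then show ?thesis using pers_pd_nonneg[of B] by linarith
      next
        case False
        then have "x \<in># image_mset fst M" using in_diff_or[OF x, of "image_mset fst M"] by blast
        then obtain b where xb: "(x,b) \<in># M" by force
        then have "b \<in># image_mset snd M" by force
        then have "b \<in># B" using M unfolding is_matching_def by (meson mset_subset_eqD)
        then have "pers b \<le> pers_pd B" by (rule pers_pd_ge)
        moreover have "linf x b \<le> match_cost X B M" using xb by (intro mc_ge) force
        ultimately show ?thesis using pers_linf[of x b] by linarith
      qed
    qed
    then show "pers_pd X - pers_pd B \<le> match_cost X B M" by simp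
  qed
  then show ?thesis by simp
qed

lemma pers_lip2: "pers_pd B \<le> pers_pd X + bottleneck X B"
proof -
  have "pers_pd B - pers_pd X \<le> bottleneck X B"
  proof (rule bn_ge)
    fix M assume M: "is_matching X B M"
    have "pers_pd B \<le> pers_pd X + match_cost X B M"
    proof (rule pers_pd_le)
      show "0 \<le> pers_pd X + match_cost X B M" using pers_pd_nonneg mc_nonneg by (simp add: add_nonneg_nonneg)
      fix x assume x: "x \<in># B"
      show "pers x \<le> pers_pd X + match_cost X B M"
      proof (cases "x \<in># B - image_mset snd M")
        case True
        then have "pers x \<le> match_cost X B M" by (intro mc_ge) auto
        then show ?thesis using pers_pd_nonneg[of X] by linarith
      next
        case False
        then have "x \<in># image_mset snd M" using in_diff_or[OF x, of "image_mset snd M"] by blast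
        then obtain b where xb: "(b,x) \<in># M" by force
        then have "b \<in># image_mset fst M" by force
        then have "b \<in># X" using M unfolding is_matching_def by (meson mset_subset_eqD)
        then have "pers b \<le> pers_pd X" by (rule pers_pd_ge)
        moreover have "linf b x \<le> match_cost X B M" using xb by (intro mc_ge) force
        ultimately show ?thesis using pers_linf[of x b] linf_sym[of b x] by linarith
      qed
    qed
    then show "pers_pd B - pers_pd X \<le> match_cost X B M" by simp
  qed
  then show ?thesis by simp
qed

lemma bn_empty: "bottleneck {#} B = pers_pd B"
proof -
  have "{M. is_matching {#} B M} = {{#}}"
    by (auto simp: is_matching_def)
  moreover have "match_cost {#} B {#} = pers_pd B"
    unfolding match_cost_def pers_pd_def by (simp add: insert_commute)
  ultimately show ?thesis unfolding bottleneck_def by simp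
qed

lemma bn_upper: "bottleneck X B \<le> pers_pd X + pers_pd B"
proof -
  have "match_cost X B {#} \<le> pers_pd X + pers_pd B"
    by (rule mc_le) (auto simp: add_nonneg_nonneg pers_pd_nonneg dest!: pers_pd_ge
      intro: order_trans[OF _ add_increasing2[OF pers_pd_nonneg order_refl]]
             order_trans[OF _ add_increasing[OF pers_pd_nonneg order_refl]])
  then show ?thesis using bn_le[OF is_matching_empty, of X B] by linarith
qed

lemma linf_tri: "linf a c \<le> linf a b + linf b c"
  unfolding linf_def by (simp add: abs_if max_def)

lemma transport:
  assumes g: "\<And>x. x \<in># X \<Longrightarrow> linf (g x) x \<le> e \<and> pers (g x) \<le> pers x + e" and e: "0 \<le> e"
  shows "bottleneck (image_mset g X) B \<le> bottleneck X B + e"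
proof -
  have "bottleneck (image_mset g X) B - e \<le> bottleneck X B"
  proof (rule bn_ge)
    fix M assume M: "is_matching X B M"
    define M' where "M' = image_mset (\<lambda>(a,b). (g a, b)) M"
    have f1: "image_mset fst M' = image_mset g (image_mset fst M)"
      unfolding M'_def by (simp add: multiset.map_comp comp_def case_prod_beta)
    have f2: "image_mset snd M' = image_mset snd M"
      unfolding M'_def by (simp add: multiset.map_comp comp_def case_prod_beta)
    have sub: "image_mset fst M \<subseteq># X" using M by (simp add: is_matching_def)
    have M': "is_matching (image_mset g X) B M'"
      using M unfolding is_matching_def f1 f2 by (auto intro: image_mset_subseteq_mono)
    have "match_cost (image_mset g X) B M' \<le> match_cost X B M + e"
    proof (rule mc_le)
      show "0 \<le> match_cost X B M + e" using mc_nonneg e by (simp add: add_nonneg_nonneg)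
    next
      fix a' b assume "(a', b) \<in># M'"
      then obtain a where ab: "(a,b) \<in># M" and a': "a' = g a" unfolding M'_def by auto
      have "a \<in># image_mset fst M" using ab by force
      then have "a \<in># X" using sub by (meson mset_subset_eqD)
      then have "linf (g a) a \<le> e" using g by blast
      moreover have "linf a b \<le> match_cost X B M" using ab by (intro mc_ge) force
      ultimately show "linf a' b \<le> match_cost X B M + e" using linf_tri[of "g a" b a] unfolding a' by linarith
    next
      fix a' assume "a' \<in># image_mset g X - image_mset fst M'"
      then have "a' \<in># image_mset g (X - image_mset fst M)"
        unfolding f1 image_mset_Diff[OF sub] .
      then obtain a where a: "a \<in># X - image_mset fst M" and a': "a' = g a" by auto
      have "a \<in># X" using a by (meson in_diffD)
      then have "pers (g a) \<le> pers a + e" using g by blast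
      moreover have "pers a \<le> match_cost X B M" using a by (intro mc_ge) force
      ultimately show "pers a' \<le> match_cost X B M + e" unfolding a' by linarith
    next
      fix b assume "b \<in># B - image_mset snd M'"
      then have "pers b \<le> match_cost X B M" unfolding f2 by (intro mc_ge) force
      then show "pers b \<le> match_cost X B M + e" using e by linarith
    qed
    moreover have "bottleneck (image_mset g X) B \<le> match_cost (image_mset g X) B M'"
      by (rule bn_le[OF M'])
    ultimately show "bottleneck (image_mset g X) B - e \<le> match_cost X B M" by linarith
  qed
  then show ?thesis by linarith
qed

lemma bd_ge: "a \<in># A \<Longrightarrow> snd a \<le> bd_pd A"
  unfolding bd_pd_def by (intro Max_ge) auto

lemma bd_nonneg: "0 \<le> bd_pd A"
  unfolding bd_pd_def by (intro Max_ge) auto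

lemma pers_le_bd: assumes "is_pd A" shows "pers_pd A \<le> bd_pd A"
proof (rule pers_pd_le[OF bd_nonneg])
  fix x assume x: "x \<in># A"
  then have "0 \<le> fst x" "fst x < snd x" using assms by (auto simp: is_pd_def)
  then have "pers x \<le> snd x" by (simp add: pers_def)
  then show "pers x \<le> bd_pd A" using bd_ge[OF x] by linarith
qed

lemma pers_pos: assumes "is_pd A" "A \<noteq> {#}" shows "0 < pers_pd A"
proof -
  obtain a where a: "a \<in># A" using assms(2) by blast
  then have "fst a < snd a" using assms by (auto simp: is_pd_def)
  then have "0 < pers a" by (simp add: pers_def)
  then show ?thesis using pers_pd_ge[OF a] by linarith
qed

lemma scale1: "scale_pd 1 A = A"
  unfolding scale_pd_def by (simp add: case_prod_beta)

lemma pers_scale: assumes "0 \<le> c" shows "pers_pd (scale_pd c A) = c * pers_pd A"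
proof (cases "c = 0")
  case True then show ?thesis by (simp add: scale_pd_def pers_pd_def)
next
  case False
  then have c: "0 < c" using assms by simp
  have ps: "pers ((\<lambda>(x,y). (c*x, c*y)) a) = c * pers a" for a
    by (simp add: pers_def case_prod_beta field_simps)
  show ?thesis
  proof (rule antisym)
    show "pers_pd (scale_pd c A) \<le> c * pers_pd A"
    proof (rule pers_pd_le)
      show "0 \<le> c * pers_pd A" using c pers_pd_nonneg by simp
      fix x assume "x \<in># scale_pd c A"
      then obtain a where a: "a \<in># A" "x = (\<lambda>(x,y). (c*x, c*y)) a" using False by (auto simp: scale_pd_def)
      then show "pers x \<le> c * pers_pd A" using ps pers_pd_ge[OF a(1)] c by simp
    qed
  next
    show "c * pers_pd A \<le> pers_pd (scale_pd c A)"
    proof (cases "A = {#}")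
      case True then show ?thesis by (simp add: scale_pd_def pers_pd_def)
    next
      case ne: False
      have fin: "finite (insert 0 (pers ` set_mset A))" by simp
      have "pers_pd A \<in> insert 0 (pers ` set_mset A)" unfolding pers_pd_def by (rule Max_in[OF fin]) simp
      then show ?thesis
      proof
        assume "pers_pd A = 0" then show ?thesis using pers_pd_nonneg by simp
      next
        assume "pers_pd A \<in> pers ` set_mset A"
        then obtain a where a: "a \<in># A" "pers_pd A = pers a" by auto
        have "(\<lambda>(x,y). (c*x, c*y)) a \<in># scale_pd c A" using a(1) False by (simp add: scale_pd_def)
        from pers_pd_ge[OF this] show ?thesis using ps a(2) by simp
      qed
    qed
  qed
qed

lemma scale_lip:
  assumes A: "is_pd A" and c: "0 \<le> c" and c': "0 \<le> c'"
  shows "bottleneck (scale_pd c A) B \<le> bottleneck (scale_pd c' A) B + \<bar>c - c'\<bar> * bd_pd A"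
proof -
  have pb: "pers_pd A \<le> bd_pd A" by (rule pers_le_bd[OF A])
  have bdn: "0 \<le> bd_pd A" by (rule bd_nonneg)
  consider "c = 0" | "c' = 0" "c > 0" | "c > 0" "c' > 0" using c c' by linarith
  then show ?thesis
  proof cases
    case 1
    have "bottleneck (scale_pd c A) B = pers_pd B" using 1 by (simp add: scale_pd_def bn_empty)
    also have "\<dots> \<le> pers_pd (scale_pd c' A) + bottleneck (scale_pd c' A) B" by (rule pers_lip2)
    also have "pers_pd (scale_pd c' A) = c' * pers_pd A" by (rule pers_scale[OF c'])
    also have "c' * pers_pd A \<le> \<bar>c - c'\<bar> * bd_pd A" using 1 c' pb by (simp add: mult_left_mono)
    finally show ?thesis by linarith
  next
    case 2
    have "bottleneck (scale_pd c A) B \<le> pers_pd (scale_pd c A) + pers_pd B" by (rule bn_upper)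
    also have "pers_pd (scale_pd c A) = c * pers_pd A" by (rule pers_scale[OF c])
    also have "pers_pd B = bottleneck (scale_pd c' A) B" using 2 by (simp add: scale_pd_def bn_empty)
    also have "c * pers_pd A \<le> \<bar>c - c'\<bar> * bd_pd A" using 2 pb by (simp add: mult_left_mono)
    finally show ?thesis by linarith
  next
    case 3
    define k where "k = c / c'"
    define g where "g = (\<lambda>(x::real,y::real). (k*x, k*y))"
    have sc: "scale_pd c A = image_mset g (scale_pd c' A)"
      using 3 unfolding scale_pd_def g_def k_def
      by (auto simp add: multiset.map_comp comp_def case_prod_beta intro!: image_mset_cong)
    have "bottleneck (image_mset g (scale_pd c' A)) B \<le> bottleneck (scale_pd c' A) B + \<bar>c - c'\<bar> * bd_pd A"
    proof (rule transport)
      show "0 \<le> \<bar>c - c'\<bar> * bd_pd A" using bdn by simp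
      fix x assume "x \<in># scale_pd c' A"
      then obtain a where a: "a \<in># A" and x: "x = (c' * fst a, c' * snd a)"
        using 3 by (auto simp: scale_pd_def case_prod_beta)
      have gx: "g x = (c * fst a, c * snd a)" using 3 unfolding x g_def k_def by simp
      have a0: "0 \<le> fst a" "fst a < snd a" using a A by (auto simp: is_pd_def)
      have sb: "snd a \<le> bd_pd A" by (rule bd_ge[OF a])
      have l1: "\<bar>c * fst a - c' * fst a\<bar> \<le> \<bar>c - c'\<bar> * bd_pd A"
      proof -
        have "\<bar>c * fst a - c' * fst a\<bar> = \<bar>c - c'\<bar> * fst a" using a0
          by (simp add: left_diff_distrib[symmetric] abs_mult)
        also have "\<dots> \<le> \<bar>c - c'\<bar> * bd_pd A" using a0 sb by (intro mult_left_mono) auto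
        finally show ?thesis .
      qed
      have l2: "\<bar>c * snd a - c' * snd a\<bar> \<le> \<bar>c - c'\<bar> * bd_pd A"
      proof -
        have "\<bar>c * snd a - c' * snd a\<bar> = \<bar>c - c'\<bar> * snd a" using a0
          by (simp add: left_diff_distrib[symmetric] abs_mult)
        also have "\<dots> \<le> \<bar>c - c'\<bar> * bd_pd A" using a0 sb by (intro mult_left_mono) auto
        finally show ?thesis .
      qed
      have "linf (g x) x \<le> \<bar>c - c'\<bar> * bd_pd A"
        unfolding linf_def gx by (simp add: x l1 l2)
      moreover have "pers (g x) \<le> pers x + \<bar>c - c'\<bar> * bd_pd A"
      proof -
        have "pers (g x) - pers x = (c - c') * ((snd a - fst a)/2)"
          unfolding pers_def gx by (simp add: x field_simps)
        also have "\<dots> \<le> \<bar>c - c'\<bar> * ((snd a - fst a)/2)" using a0 by (intro mult_right_mono) auto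
        also have "\<dots> \<le> \<bar>c - c'\<bar> * bd_pd A" using a0 sb by (intro mult_left_mono) auto
        finally show ?thesis by linarith
      qed
      ultimately show "linf (g x) x \<le> \<bar>c - c'\<bar> * bd_pd A \<and> pers (g x) \<le> pers x + \<bar>c - c'\<bar> * bd_pd A" by blast
    qed
    then show ?thesis using sc by simp
  qed
qed

lemma grid:
  fixes cmin cmax c :: real and N :: nat
  assumes "N \<ge> 1" "cmin \<le> c" "c \<le> cmax"
  shows "\<exists>i\<in>{0..N}. \<bar>cmin + real i / real N * (cmax - cmin) - c\<bar> \<le> (cmax - cmin) / real N"
proof (cases "cmax = cmin")
  case True then show ?thesis using assms by (intro bexI[of _ 0]) auto
next
  case False
  then have d: "cmax - cmin > 0" using assms by simp
  define s where "s = (c - cmin) / (cmax - cmin)"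
  have s0: "0 \<le> s" "s \<le> 1" using assms d unfolding s_def by (auto simp: divide_simps)
  define i where "i = nat \<lfloor>s * real N\<rfloor>"
  have N: "real N \<ge> 1" using assms by simp
  have sN: "0 \<le> s * real N" using s0 by simp
  have i1: "real i \<le> s * real N" unfolding i_def using sN by linarith
  have i2: "s * real N < real i + 1" unfolding i_def using sN by linarith
  have iN: "i \<le> N"
  proof -
    have "s * real N \<le> real N" using s0 N by (simp add: mult_left_le_one_le)
    then show ?thesis using i1 by linarith
  qed
  have c_eq: "c = cmin + s * (cmax - cmin)" unfolding s_def using d by simp
  have "cmin + real i / real N * (cmax - cmin) - c = (real i - s * real N) / real N * (cmax - cmin)"
    unfolding c_eq using N by (simp add: field_simps)
  moreover have e: "\<bar>real i - s * real N\<bar> \<le> 1" using i1 i2 by linarith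
  have "\<bar>real i - s * real N\<bar> * (cmax - cmin) \<le> 1 * (cmax - cmin)"
    using e d by (intro mult_right_mono) auto
  then have "\<bar>real i - s * real N\<bar> * (cmax - cmin) / real N \<le> (cmax - cmin) / real N"
    using N by (intro divide_right_mono) auto
  ultimately have "\<bar>cmin + real i / real N * (cmax - cmin) - c\<bar> \<le> (cmax - cmin) / real N"
    using d N by (simp add: abs_mult abs_divide)
  then show ?thesis using iN by (intro bexI[of _ i]) auto
qed

theorem mainTheorem5:
  fixes A B :: pdiag and N :: nat
  assumes "is_pd A" and "is_pd B" and "A \<noteq> {#}" and "N \<ge> 1"
  defines "d0 \<equiv> min (bottleneck A B) (bottleneck {#} B)"
  defines "cmin \<equiv> max 0 ((pers_pd B - d0) / pers_pd A)"
  defines "cmax \<equiv> (pers_pd B + d0) / pers_pd A"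
  defines "t \<equiv> (\<lambda>i::nat. cmin + real i / real N * (cmax - cmin))"
  defines "dhat \<equiv> Min ((\<lambda>i. bottleneck (scale_pd (t i) A) B) ` {0..N})"
  shows "0 \<le> dhat - dbar A B \<and>
         dhat - dbar A B \<le> 2 * d0 * bd_pd A / (real N * pers_pd A)"
proof -
  define f where "f c = bottleneck (scale_pd c A) B" for c
  define pA where "pA = pers_pd A"
  define pB where "pB = pers_pd B"
  define bd where "bd = bd_pd A"
  define L where "L = 2 * d0 * bd / (real N * pA)"
  have pA: "0 < pA" unfolding pA_def by (rule pers_pos[OF assms(1,3)])
  have bd0: "0 \<le> bd" unfolding bd_def by (rule bd_nonneg)
  have N1: "real N \<ge> 1" using assms(4) by simp
  have f0: "f 0 = pB" unfolding f_def pB_def by (simp add: scale_pd_def bn_empty)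
  have f1: "f 1 = bottleneck A B" unfolding f_def by (simp add: scale1)
  have d0: "d0 = min (f 1) pB" unfolding d0_def f1 pB_def bn_empty ..
  have fnn: "0 \<le> f c" for c unfolding f_def by (rule bn_nonneg)
  have d0nn: "0 \<le> d0" using fnn[of 1] fnn[of 0] f0 d0 by simp
  have lip: "f c \<le> f c' + \<bar>c - c'\<bar> * bd" if "0 \<le> c" "0 \<le> c'" for c c'
    unfolding f_def bd_def by (rule scale_lip[OF assms(1) that])
  have pl: "\<bar>c * pA - pB\<bar> \<le> f c" if "0 \<le> c" for c
    using pers_lip1[of "scale_pd c A" B] pers_lip2[of B "scale_pd c A"] pers_scale[OF that, of A]
    unfolding f_def pA_def pB_def by linarith
  have cmin0: "0 \<le> cmin" unfolding cmin_def by simp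
  have cminmax: "cmin \<le> cmax"
  proof -
    have "0 \<le> (pB + d0) / pA" using pA d0nn pers_pd_nonneg[of B] unfolding pB_def by simp
    moreover have "(pB - d0) / pA \<le> (pB + d0) / pA" using pA d0nn by (intro divide_right_mono) auto
    ultimately show ?thesis unfolding cmin_def cmax_def pB_def pA_def by simp
  qed
  have width: "cmax - cmin \<le> 2 * d0 / pA"
  proof -
    have "cmax - cmin \<le> cmax - (pB - d0) / pA" unfolding cmin_def pB_def pA_def by simp
    also have "\<dots> = 2 * d0 / pA" unfolding cmax_def pB_def pA_def by (simp add: add_divide_distrib diff_divide_distrib)
    finally show ?thesis .
  qed
  have inI: "cmin \<le> c \<and> c \<le> cmax" if "0 \<le> c" "f c \<le> d0" for c
  proof -
    have "\<bar>c * pA - pB\<bar> \<le> d0" using pl[OF that(1)] that(2) by linarith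
    then have "pB - d0 \<le> c * pA" "c * pA \<le> pB + d0" by auto
    then have "(pB - d0) / pA \<le> c" "c \<le> (pB + d0) / pA" using pA by (auto simp: divide_simps)
    then show ?thesis unfolding cmin_def cmax_def pB_def pA_def using that(1) by auto
  qed
  have c0: "\<exists>c0. 0 \<le> c0 \<and> cmin \<le> c0 \<and> c0 \<le> cmax \<and> f c0 = d0"
  proof (cases "f 1 \<le> pB")
    case True
    then have "f 1 = d0" using d0 by simp
    then show ?thesis using inI[of 1] by (intro exI[of _ 1]) auto
  next
    case False
    then have "f 0 = d0" using d0 f0 by simp
    then show ?thesis using inI[of 0] by (intro exI[of _ 0]) auto
  qed
  have tnn: "0 \<le> t i" if "i \<le> N" for i
  proof -
    have "0 \<le> real i / real N * (cmax - cmin)" using cminmax by simp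
    then show ?thesis unfolding t_def using cmin0 by linarith
  qed
  have fin: "finite ((\<lambda>i. f (t i)) ` {0..N})" "(\<lambda>i. f (t i)) ` {0..N} \<noteq> {}" by auto
  have dhat: "dhat = Min ((\<lambda>i. f (t i)) ` {0..N})" unfolding dhat_def f_def ..
  have near: "dhat \<le> f c + L" if cc: "cmin \<le> c" "c \<le> cmax" for c
  proof -
    obtain i where i: "i \<in> {0..N}" "\<bar>t i - c\<bar> \<le> (cmax - cmin) / real N"
      using grid[OF assms(4) cc] unfolding t_def by blast
    have c0': "0 \<le> c" using cc cmin0 by linarith
    have "dhat \<le> f (t i)" unfolding dhat using i(1) fin by (intro Min_le) auto
    also have "\<dots> \<le> f c + \<bar>t i - c\<bar> * bd" using lip[OF tnn c0'] i(1) by auto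
    also have "\<bar>t i - c\<bar> * bd \<le> (cmax - cmin) / real N * bd" using i(2) bd0 by (rule mult_right_mono)
    also have "(cmax - cmin) / real N * bd \<le> 2 * d0 / pA / real N * bd"
      using width N1 bd0 by (intro mult_right_mono divide_right_mono) auto
    also have "2 * d0 / pA / real N * bd = L" unfolding L_def by (simp add: field_simps)
    finally show ?thesis by simp
  qed
  have allc: "dhat - L \<le> f c" if "0 \<le> c" for c
  proof (cases "f c \<le> d0")
    case True then show ?thesis using near inI[OF that True] by force
  next
    case False
    obtain c0 where "cmin \<le> c0" "c0 \<le> cmax" "f c0 = d0" using c0 by blast
    then show ?thesis using near[of c0] False by linarith
  qed
  have dbar: "dbar A B = Inf (f ` {0..})" unfolding dbar_def f_def ..
  have lo: "dhat - L \<le> dbar A B" unfolding dbar by (rule cInf_greatest) (use allc in auto)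
  have "dhat \<in> (\<lambda>i. f (t i)) ` {0..N}" unfolding dhat using fin by (rule Min_in)
  then obtain i where i: "i \<le> N" "dhat = f (t i)" by auto
  have hi: "dbar A B \<le> dhat" unfolding dbar i(2)
    by (rule cInf_lower) (use tnn[OF i(1)] fnn in \<open>auto intro: bdd_belowI[where m=0]\<close>)
  show ?thesis using lo hi unfolding L_def bd_def pA_def by linarith
qed

end
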